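(* Let $\widetilde{\mathcal{A}}^+,\widetilde{\mathcal{A}}^-\subseteq\mathbb{R}^d$. If the problem $$\max_{\|y\|_*\le1,\ b\in\mathbb{R}} h(y,b;\widetilde{\mathcal{A}}^+,\widetilde{\mathcal{A}}^-)$$ has an optimal solution and a positive optimal value, then every optimal solution $(\hat y,\hat b)$ satisfies $\|\hat y\|_*=1$. If moreover the norm $\|\cdot\|$ and its dual $\|\cdot\|_*$ are both strictly convex (i.e. $\|\beta w+(1-\beta)z\|<\beta\|w\|+(1-\beta)\|z\|$ whenever $\beta\in(0,1)$ and $w,z$ are not collinear, and likewise for $\|\cdot\|_*$), then the optimal solution is unique.
   Context: $\|\cdot\|$ is a norm on $\mathbb{R}^d$ with dual norm $\|y\|_*=\max_{\|w\|\le1}y^\top w$. For sets $\widetilde{\mathcal{A}}^+,\widetilde{\mathcal{A}}^-\subseteq\mathbb{R}^d$ the margin function is $$h(y,b;\widetilde{\mathcal{A}}^+,\widetilde{\mathcal{A}}^-)=\min\Big\{\min_{x\in\widetilde{\mathcal{A}}^+}(y^\top x+b),\ \min_{x\in\widetilde{\mathcal{A}}^-}(-y^\top x-b)\Big\},$$ which equals $\tfrac12\big(\min_{x\in\widetilde{\mathcal{A}}^+}y^\top x-\max_{x\in\widetilde{\mathcal{A}}^-}y^\top x\big)-\big|b+\tfrac12\big(\min_{x\in\widetilde{\mathcal{A}}^+}y^\top x+\max_{x\in\widetilde{\mathcal{A}}^-}y^\top x\big)\big|$. *)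

theory Defs
  imports "HOL-Analysis.Analysis" "HOL-Library.Extended_Real"
begin

definition is_norm :: "(real^'d \<Rightarrow> real) \<Rightarrow> bool" where
  "is_norm N \<longleftrightarrow>
     (\<forall>x. N x = 0 \<longleftrightarrow> x = 0) \<and>
     (\<forall>c x. N (c *\<^sub>R x) = \<bar>c\<bar> * N x) \<and>
     (\<forall>x y. N (x + y) \<le> N x + N y)"

definition dual_norm :: "(real^'d \<Rightarrow> real) \<Rightarrow> real^'d \<Rightarrow> real" where
  "dual_norm N y = Sup {y \<bullet> w | w. N w \<le> 1}"

definition collinear_pair :: "real^'d \<Rightarrow> real^'d \<Rightarrow> bool" where
  "collinear_pair w z \<longleftrightarrow> (\<exists>c. w = c *\<^sub>R z) \<or> (\<exists>c. z = c *\<^sub>R w)"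

definition strictly_convex_norm :: "(real^'d \<Rightarrow> real) \<Rightarrow> bool" where
  "strictly_convex_norm N \<longleftrightarrow>
     (\<forall>\<beta> w z. 0 < \<beta> \<and> \<beta> < 1 \<and> \<not> collinear_pair w z \<longrightarrow>
        N (\<beta> *\<^sub>R w + (1 - \<beta>) *\<^sub>R z) < \<beta> * N w + (1 - \<beta>) * N z)"

text \<open>Margin function; minima over the sets are taken as infima in the extended reals.\<close>
definition margin :: "real^'d \<Rightarrow> real \<Rightarrow> (real^'d) set \<Rightarrow> (real^'d) set \<Rightarrow> ereal" where
  "margin y b Ap Am =
     min (Inf ((\<lambda>x. ereal (y \<bullet> x + b)) ` Ap))
         (Inf ((\<lambda>x. ereal (- (y \<bullet> x) - b)) ` Am))"

definition optimal_sol ::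
  "(real^'d \<Rightarrow> real) \<Rightarrow> (real^'d) set \<Rightarrow> (real^'d) set \<Rightarrow> real^'d \<Rightarrow> real \<Rightarrow> bool" where
  "optimal_sol N Ap Am y b \<longleftrightarrow>
     dual_norm N y \<le> 1 \<and>
     (\<forall>y' b'. dual_norm N y' \<le> 1 \<longrightarrow> margin y' b' Ap Am \<le> margin y b Ap Am)"

end

theory Submission imports Defs begin

lemma norm_convex:
  fixes N :: "real^'d \<Rightarrow> real"
  assumes "is_norm N" shows "convex_on UNIV N"
proof (rule convex_onI)
  fix t :: real and x y assume t: "0 < t" "t < 1"
  have "N ((1 - t) *\<^sub>R x + t *\<^sub>R y) \<le> N ((1 - t) *\<^sub>R x) + N (t *\<^sub>R y)"
    using assms unfolding is_norm_def by blast
  also have "\<dots> = (1 - t) * N x + t * N y" using assms t unfolding is_norm_def by simp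
  finally show "N ((1 - t) *\<^sub>R x + t *\<^sub>R y) \<le> (1 - t) * N x + t * N y" .
qed auto

lemma norm_lower:
  fixes N :: "real^'d \<Rightarrow> real"
  assumes "is_norm N" shows "\<exists>m>0. \<forall>x. m * norm x \<le> N x"
proof -
  have c: "continuous_on (sphere 0 1) N"
    using convex_on_continuous[OF open_UNIV norm_convex[OF assms]] continuous_on_subset by blast
  obtain x0 where x0: "x0 \<in> sphere 0 1" "\<forall>y\<in>sphere 0 1. N x0 \<le> N y"
    using continuous_attains_inf[OF compact_sphere _ c] by auto
  have nn: "\<And>x. N x \<ge> 0"
  proof -
    fix x
    have "N (x + (-1) *\<^sub>R x) \<le> N x + N ((-1) *\<^sub>R x)" using assms unfolding is_norm_def by blast
    moreover have "N ((-1) *\<^sub>R x) = N x" using assms unfolding is_norm_def by (metis abs_neg_one mult_1)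
    moreover have "N (x + (-1) *\<^sub>R x) = 0" using assms unfolding is_norm_def by simp
    ultimately show "N x \<ge> 0" by linarith
  qed
  have "x0 \<noteq> 0" using x0 by auto
  hence pos: "N x0 > 0" using assms nn unfolding is_norm_def by (metis less_eq_real_def)
  have "\<forall>x. N x0 * norm x \<le> N x"
  proof
    fix x :: "real^'d"
    show "N x0 * norm x \<le> N x"
    proof (cases "x = 0")
      case True thus ?thesis using nn by simp
    next
      case False
      hence "(1 / norm x) *\<^sub>R x \<in> sphere 0 1" by simp
      hence "N x0 \<le> N ((1 / norm x) *\<^sub>R x)" using x0 by blast
      also have "\<dots> = N x / norm x" using assms unfolding is_norm_def by simp
      finally show ?thesis using False by (simp add: field_simps)
    qed
  qed
  thus ?thesis using pos by blast
qed

lemma dual_bdd: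
  fixes N :: "real^'d \<Rightarrow> real"
  assumes "is_norm N" shows "bdd_above {y \<bullet> w | w. N w \<le> 1}"
proof -
  obtain m where m: "m > 0" "\<forall>x. m * norm x \<le> N x" using norm_lower[OF assms] by blast
  have "\<forall>v\<in>{y \<bullet> w | w. N w \<le> 1}. v \<le> norm y / m"
  proof safe
    fix w :: "real^'d" assume "N w \<le> 1"
    hence "norm w \<le> 1 / m" using m by (smt (verit) divide_right_mono mult.commute nonzero_mult_div_cancel_left)
    have "y \<bullet> w \<le> norm y * norm w" by (simp add: Cauchy_Schwarz_ineq2 abs_le_D1)
    also have "\<dots> \<le> norm y * (1 / m)" using \<open>norm w \<le> 1 / m\<close> by (intro mult_left_mono) auto
    finally show "y \<bullet> w \<le> norm y / m" by simp
  qed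
  thus ?thesis unfolding bdd_above_def by blast
qed

lemma dual_le:
  fixes N :: "real^'d \<Rightarrow> real"
  assumes "is_norm N" shows "dual_norm N y \<le> t \<longleftrightarrow> (\<forall>w. N w \<le> 1 \<longrightarrow> y \<bullet> w \<le> t)"
proof -
  have ne: "{y \<bullet> w | w. N w \<le> 1} \<noteq> {}" using assms unfolding is_norm_def
    by (metis (mono_tags, lifting) empty_iff mem_Collect_eq zero_less_one_class.zero_le_one)
  show ?thesis unfolding dual_norm_def using cSup_le_iff[OF ne dual_bdd[OF assms]] by blast
qed

lemma dual_ge:
  fixes N :: "real^'d \<Rightarrow> real"
  assumes "is_norm N" "N w \<le> 1" shows "y \<bullet> w \<le> dual_norm N y"
  unfolding dual_norm_def using assms by (intro cSup_upper dual_bdd) auto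

lemma eq_by_le:
  fixes a b :: real
  assumes "\<And>t. a \<le> t \<longleftrightarrow> b \<le> t" shows "a = b"
  using assms[of a] assms[of b] by linarith

lemma dual_scale:
  fixes N :: "real^'d \<Rightarrow> real"
  assumes "is_norm N" shows "dual_norm N (c *\<^sub>R y) = \<bar>c\<bar> * dual_norm N y"
proof (cases "c = 0")
  case True
  have "dual_norm N 0 = 0"
    proof -
    have "N 0 \<le> 1" using assms unfolding is_norm_def by (metis order_refl zero_le_one)
    thus ?thesis using dual_le[OF assms, of 0 0] dual_ge[OF assms, of 0 0] by simp
  qed
  thus ?thesis using True by simp
next
  case False
  have sym: "N (-w) = N w" for w using assms unfolding is_norm_def
    by (metis abs_neg_one mult_1 scaleR_minus1_left)
  show ?thesis
  proof (rule eq_by_le)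
    fix t
    have "dual_norm N (c *\<^sub>R y) \<le> t \<longleftrightarrow> (\<forall>w. N w \<le> 1 \<longrightarrow> \<bar>c\<bar> * (y \<bullet> w) \<le> t)"
    proof -
      have "(\<forall>w. N w \<le> 1 \<longrightarrow> (c *\<^sub>R y) \<bullet> w \<le> t) \<longleftrightarrow> (\<forall>w. N w \<le> 1 \<longrightarrow> \<bar>c\<bar> * (y \<bullet> w) \<le> t)"
      proof (cases "c > 0")
        case True thus ?thesis by simp
      next
        case f: False
        hence ac: "\<bar>c\<bar> = - c" by simp
        show ?thesis
        proof
          assume h: "\<forall>w. N w \<le> 1 \<longrightarrow> (c *\<^sub>R y) \<bullet> w \<le> t"
          show "\<forall>w. N w \<le> 1 \<longrightarrow> \<bar>c\<bar> * (y \<bullet> w) \<le> t"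
          proof safe
            fix w assume "N w \<le> 1" hence "N (-w) \<le> 1" using sym by simp
            thus "\<bar>c\<bar> * (y \<bullet> w) \<le> t" using h ac by (metis inner_minus_right inner_scaleR_left mult_minus_left)
          qed
        next
          assume h: "\<forall>w. N w \<le> 1 \<longrightarrow> \<bar>c\<bar> * (y \<bullet> w) \<le> t"
          show "\<forall>w. N w \<le> 1 \<longrightarrow> (c *\<^sub>R y) \<bullet> w \<le> t"
          proof safe
            fix w assume "N w \<le> 1" hence "N (-w) \<le> 1" using sym by simp
            thus "(c *\<^sub>R y) \<bullet> w \<le> t" using h ac by (metis inner_minus_right inner_scaleR_left mult_minus_left minus_mult_minus)
          qed
        qed
      qed
      thus ?thesis using dual_le[OF assms] by blast
    qed
    also have "\<dots> \<longleftrightarrow> (\<forall>w. N w \<le> 1 \<longrightarrow> y \<bullet> w \<le> t / \<bar>c\<bar>)"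
      using False by (simp add: pos_le_divide_eq mult.commute)
    also have "\<dots> \<longleftrightarrow> dual_norm N y \<le> t / \<bar>c\<bar>" using dual_le[OF assms] by blast
    also have "\<dots> \<longleftrightarrow> \<bar>c\<bar> * dual_norm N y \<le> t" using False by (simp add: pos_le_divide_eq mult.commute)
    finally show "dual_norm N (c *\<^sub>R y) \<le> t \<longleftrightarrow> \<bar>c\<bar> * dual_norm N y \<le> t" .
  qed
qed

lemma dual_pos:
  fixes N :: "real^'d \<Rightarrow> real"
  assumes "is_norm N" "y \<noteq> 0" shows "dual_norm N y > 0"
proof -
  have Ny: "N y > 0" using assms norm_lower[OF assms(1)]
    by (metis mult_pos_pos zero_less_norm_iff order_less_le_trans)
  have "N ((1 / N y) *\<^sub>R y) \<le> 1" using assms(1) Ny unfolding is_norm_def by simp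
  hence "y \<bullet> ((1 / N y) *\<^sub>R y) \<le> dual_norm N y" by (rule dual_ge[OF assms(1)])
  moreover have "y \<bullet> ((1 / N y) *\<^sub>R y) > 0" using Ny assms(2) by (simp add: inner_commute)
  ultimately show ?thesis by linarith
qed

lemma margin_ge:
  "ereal M \<le> margin y b Ap Am \<longleftrightarrow> (\<forall>x\<in>Ap. M \<le> y \<bullet> x + b) \<and> (\<forall>x\<in>Am. M \<le> - (y \<bullet> x) - b)"
  by (simp add: margin_def le_Inf_iff)

theorem mainTheorem4:
  fixes N :: "real^'d \<Rightarrow> real" and Ap Am :: "(real^'d) set"
  assumes "is_norm N"
    and "Ap \<noteq> {}" and "Am \<noteq> {}"
    and "\<exists>y0 b0. optimal_sol N Ap Am y0 b0 \<and> margin y0 b0 Ap Am > 0"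
  shows "(\<forall>y b. optimal_sol N Ap Am y b \<longrightarrow> dual_norm N y = 1) \<and>
         (strictly_convex_norm N \<and> strictly_convex_norm (dual_norm N) \<longrightarrow>
            (\<forall>y1 b1 y2 b2. optimal_sol N Ap Am y1 b1 \<and> optimal_sol N Ap Am y2 b2
                \<longrightarrow> y1 = y2 \<and> b1 = b2))"
proof -
  note nm = assms(1)
  obtain y0 b0 where o0: "optimal_sol N Ap Am y0 b0" and p0: "margin y0 b0 Ap Am > 0"
    using assms(4) by blast
  obtain xp where xp: "xp \<in> Ap" using assms(2) by blast
  obtain xm where xm: "xm \<in> Am" using assms(3) by blast
  have "margin y0 b0 Ap Am \<le> ereal (y0 \<bullet> xp + b0)"
    unfolding margin_def using xp by (meson INF_lower min.coboundedI1)
  hence "margin y0 b0 Ap Am \<noteq> \<infinity>" by auto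
  moreover have "margin y0 b0 Ap Am \<noteq> -\<infinity>" using p0 by auto
  ultimately obtain M where M: "margin y0 b0 Ap Am = ereal M" by (cases "margin y0 b0 Ap Am") auto
  have Mpos: "M > 0" using p0 M by simp
  have opt_eq: "margin y b Ap Am = ereal M" if "optimal_sol N Ap Am y b" for y b
    using that o0 M unfolding optimal_sol_def by (metis order_antisym)
  have upper: "margin y b Ap Am \<le> ereal M" if "dual_norm N y \<le> 1" for y b
    using that o0 M unfolding optimal_sol_def by metis
  have no_small: False if d: "dual_norm N y < 1" and g: "ereal M \<le> margin y b Ap Am" for y b
  proof (cases "y = 0")
    case True
    have "M \<le> b" "M \<le> - b" using g xp xm True unfolding margin_ge by auto
    thus False using Mpos by linarith
  next
    case False
    define t where "t = dual_norm N y"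
    have t: "0 < t" "t < 1" using dual_pos[OF nm False] d t_def by auto
    have "dual_norm N ((1 / t) *\<^sub>R y) = 1" using dual_scale[OF nm] t t_def by simp
    hence u: "margin ((1 / t) *\<^sub>R y) (b / t) Ap Am \<le> ereal M" using upper by simp
    have "ereal (M / t) \<le> margin ((1 / t) *\<^sub>R y) (b / t) Ap Am"
      unfolding margin_ge
    proof safe
      fix x assume "x \<in> Ap"
      hence "M \<le> y \<bullet> x + b" using g unfolding margin_ge by blast
      hence "M / t \<le> (y \<bullet> x + b) / t" using t by (simp add: divide_right_mono)
      thus "M / t \<le> (1 / t) *\<^sub>R y \<bullet> x + b / t" by (simp add: add_divide_distrib)
    next
      fix x assume "x \<in> Am"
      hence "M \<le> - (y \<bullet> x) - b" using g unfolding margin_ge by blast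
      hence "M / t \<le> (- (y \<bullet> x) - b) / t" using t by (simp add: divide_right_mono)
      thus "M / t \<le> - ((1 / t) *\<^sub>R y \<bullet> x) - b / t" by (simp add: diff_divide_distrib)
    qed
    with u have "ereal (M / t) \<le> ereal M" by (rule order_trans[rotated])
    hence "M / t \<le> M" by simp
    moreover have "M < M / t" using t Mpos by (simp add: less_divide_eq)
    ultimately show False by linarith
  qed
  have part1: "\<forall>y b. optimal_sol N Ap Am y b \<longrightarrow> dual_norm N y = 1"
  proof safe
    fix y b assume o: "optimal_sol N Ap Am y b"
    hence "dual_norm N y \<le> 1" unfolding optimal_sol_def by blast
    moreover have "\<not> dual_norm N y < 1" using no_small[of y b] opt_eq[OF o] by auto
    ultimately show "dual_norm N y = 1" by linarith
  qed
  have part2: "y1 = y2 \<and> b1 = b2"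
    if sc: "strictly_convex_norm (dual_norm N)"
      and o1: "optimal_sol N Ap Am y1 b1" and o2: "optimal_sol N Ap Am y2 b2" for y1 b1 y2 b2
  proof -
    have g1: "ereal M \<le> margin y1 b1 Ap Am" and g2: "ereal M \<le> margin y2 b2 Ap Am"
      using opt_eq o1 o2 by auto
    have d1: "dual_norm N y1 = 1" and d2: "dual_norm N y2 = 1" using part1 o1 o2 by auto
    define ym where "ym = (1/2::real) *\<^sub>R y1 + (1 - 1/2::real) *\<^sub>R y2"
    define bm where "bm = (b1 + b2) / 2"
    have gm: "ereal M \<le> margin ym bm Ap Am"
      unfolding margin_ge
    proof safe
      fix x assume "x \<in> Ap"
      hence "M \<le> y1 \<bullet> x + b1" "M \<le> y2 \<bullet> x + b2" using g1 g2 unfolding margin_ge by auto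
      thus "M \<le> ym \<bullet> x + bm" unfolding ym_def bm_def by (simp add: inner_add_left field_simps)
    next
      fix x assume "x \<in> Am"
      hence "M \<le> - (y1 \<bullet> x) - b1" "M \<le> - (y2 \<bullet> x) - b2" using g1 g2 unfolding margin_ge by auto
      thus "M \<le> - (ym \<bullet> x) - bm" unfolding ym_def bm_def by (simp add: inner_add_left field_simps)
    qed
    have col: "collinear_pair y1 y2"
    proof (rule ccontr)
      assume "\<not> collinear_pair y1 y2"
      hence "dual_norm N ym < (1/2) * dual_norm N y1 + (1 - 1/2) * dual_norm N y2"
        using sc unfolding strictly_convex_norm_def ym_def
        by (metis (no_types) half_gt_zero zero_less_one less_numeral_extra(1) divide_less_eq_1_pos zero_less_numeral one_less_numeral_iff semiring_norm(76))
      hence "dual_norm N ym < 1" using d1 d2 by simp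
      thus False using no_small gm by blast
    qed
    have yy: "y1 = y2"
    proof -
      have "\<exists>c. (y1 = c *\<^sub>R y2 \<or> y2 = c *\<^sub>R y1) \<and> \<bar>c\<bar> = 1"
      proof -
        obtain c where c: "y1 = c *\<^sub>R y2 \<or> y2 = c *\<^sub>R y1" using col unfolding collinear_pair_def by blast
        hence "\<bar>c\<bar> = 1" using d1 d2 dual_scale[OF nm] by auto
        thus ?thesis using c by blast
      qed
      then obtain c where c: "y1 = c *\<^sub>R y2 \<or> y2 = c *\<^sub>R y1" "c = 1 \<or> c = -1" by (metis abs_if minus_equation_iff)
      show ?thesis
      proof (rule ccontr)
        assume ne: "y1 \<noteq> y2"
        hence "c = -1" using c by auto
        hence "ym = 0" using c unfolding ym_def by auto
        hence "dual_norm N ym = 0" using dual_scale[OF nm, of 0 0] by simp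
        thus False using no_small[OF _ gm] by simp
      qed
    qed
    have bb: False if lt: "ba < bb" and h1: "ereal M \<le> margin y1 ba Ap Am"
      and h2: "ereal M \<le> margin y1 bb Ap Am" for ba bb
    proof -
      define \<delta> where "\<delta> = (bb - ba) / 2"
      have dp: "\<delta> > 0" using lt \<delta>_def by simp
      have "ereal (M + \<delta>) \<le> margin y1 ((ba + bb) / 2) Ap Am"
        unfolding margin_ge
      proof safe
        fix x assume "x \<in> Ap"
        hence "M \<le> y1 \<bullet> x + ba" using h1 unfolding margin_ge by auto
        thus "M + \<delta> \<le> y1 \<bullet> x + (ba + bb) / 2" unfolding \<delta>_def by (simp add: field_simps)
      next
        fix x assume "x \<in> Am"
        hence "M \<le> - (y1 \<bullet> x) - bb" using h2 unfolding margin_ge by auto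
        thus "M + \<delta> \<le> - (y1 \<bullet> x) - (ba + bb) / 2" unfolding \<delta>_def by (simp add: field_simps)
      qed
      moreover have "margin y1 ((ba + bb) / 2) Ap Am \<le> ereal M" using upper d1 by simp
      ultimately have "ereal (M + \<delta>) \<le> ereal M" by (rule order_trans)
      thus False using dp by simp
    qed
    have "b1 = b2"
    proof (rule ccontr)
      assume "b1 \<noteq> b2"
      hence "b1 < b2 \<or> b2 < b1" by linarith
      thus False using bb g1 g2 yy by blast
    qed
    thus ?thesis using yy by simp
  qed
  show ?thesis using part1 part2 by blast
qed

end
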